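(* There exist absolute constants $C, C'>0$ such that the following holds. Let $n\ge 2$, $1\le k\le n/2$ and $d\ge 0$ be integers, let $\alpha=\lceil k\log(n/k)\rceil$, and let $t$ be an integer with $t\ge C\,(dk+k^2)\log(n/k)$ (so that in particular $\alpha\le t/(2d+1)$). Then the random $t\times n$ matrix $M$ produced by $\mathsf{RandMatrix}(t,n,d,k,\alpha)$ is $d$-runlength constrained, and with probability at least $1-C'/n$ it is $k$-disjunct. (In the paper's words: with $\alpha=k\log(n/k)$ and $t=\Theta(dk\log(n/k)+k^2\log(n/k))$, the output is a $k$-disjunct, $d$-runlength constrained matrix with probability at least $1-O(1/n)$.)
   Context: $\log$ denotes the base-2 logarithm. For a vector $x$, $\mathsf{supp}(x)$ is its support. A binary $t\times n$ matrix $M$ is $d$-runlength constrained if in every column, any two $1$'s are separated by a run of at least $d$ zeros, i.e. $M_{ij}=M_{i'j}=1$ with $i<i'$ implies $i'-i\ge d+1$. A binary matrix $M$ is $k$-disjunct if for every column $j$ and every set $S$ of at most $k$ columns with $j\notin S$, $\mathsf{supp}(M_{\cdot j})\not\subseteq\bigcup_{j'\in S}\mathsf{supp}(M_{\cdot j'})$. Procedure $\mathsf{RandMatrix}(t,n,d,k,\alpha)$ (requires $\alpha\le t/(2d+1)$): each column $M_{\cdot j}$, $j\in[n]$, is generated independently and identically as follows. Initialize the list $I=(1,2,\dots,t)$, viewed in cyclic order. Repeat $\alpha$ times: pick an index $i$ uniformly at random from $I$; set $M_{ij}=1$; let $U$ consist of $i$ together with the $d$ elements of $I$ immediately preceding $i$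 and the $d$ elements of $I$ immediately succeeding $i$ in the cyclic order of $I$; remove $U$ from $I$. All entries of column $j$ not set to $1$ are $0$. *)

theory Defs
  imports "HOL-Probability.Probability"
begin

text \<open>Binary t x n matrices are modelled as M :: nat => nat => bool, where
  M i j (row i in {1..t}, column j in {1..n}) means the entry is 1.\<close>

definition runlength_constrained :: "nat \<Rightarrow> nat \<Rightarrow> nat \<Rightarrow> (nat \<Rightarrow> nat \<Rightarrow> bool) \<Rightarrow> bool" where
  "runlength_constrained t n d M \<longleftrightarrow>
     (\<forall>j\<in>{1..n}. \<forall>i\<in>{1..t}. \<forall>i'\<in>{1..t}. M i j \<and> M i' j \<and> i < i' \<longrightarrow> i' - i \<ge> d + 1)"

definition col_supp :: "nat \<Rightarrow> (nat \<Rightarrow> nat \<Rightarrow> bool) \<Rightarrow> nat \<Rightarrow> nat set" where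
  "col_supp t M j = {i\<in>{1..t}. M i j}"

definition disjunct :: "nat \<Rightarrow> nat \<Rightarrow> nat \<Rightarrow> (nat \<Rightarrow> nat \<Rightarrow> bool) \<Rightarrow> bool" where
  "disjunct t n k M \<longleftrightarrow>
     (\<forall>j\<in>{1..n}. \<forall>S. S \<subseteq> {1..n} \<and> card S \<le> k \<and> j \<notin> S \<longrightarrow>
        \<not> (col_supp t M j \<subseteq> (\<Union>j'\<in>S. col_supp t M j')))"

text \<open>Remove from the list xs (viewed cyclically) the element at position p together with the
  d elements immediately preceding and the d elements immediately succeeding it (cyclically).\<close>
definition remove_window :: "nat \<Rightarrow> nat \<Rightarrow> nat list \<Rightarrow> nat list" where
  "remove_window d p xs =
     (let L = length xs in
      map (\<lambda>q. xs ! q)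
        (filter (\<lambda>q. \<not> (\<exists>m\<le>2*d. q = (p + L * (d + 1) - d + m) mod L)) [0..<L]))"

text \<open>One round: pick an element of the remaining list uniformly at random, record it as a 1,
  and delete its cyclic window of radius d. State = (remaining list I, set of rows set to 1).\<close>
definition rm_step :: "nat \<Rightarrow> nat list \<times> nat set \<Rightarrow> (nat list \<times> nat set) pmf" where
  "rm_step d s = (case s of (I, S) \<Rightarrow>
     if I = [] then return_pmf (I, S)
     else do { p \<leftarrow> pmf_of_set {0..<length I};
               return_pmf (remove_window d p I, insert (I ! p) S) })"

fun rm_iter :: "nat \<Rightarrow> nat \<Rightarrow> nat list \<times> nat set \<Rightarrow> (nat list \<times> nat set) pmf" where
  "rm_iter d 0 s = return_pmf s"
| "rm_iter d (Suc m) s = bind_pmf (rm_iter d m s) (rm_step d)"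

definition rand_column :: "nat \<Rightarrow> nat \<Rightarrow> nat \<Rightarrow> nat set pmf" where
  "rand_column t d \<alpha> = map_pmf snd (rm_iter d \<alpha> ([1..<Suc t], {}))"

text \<open>RandMatrix(t,n,d,k,alpha): n independent identically distributed columns (k is unused
  by the procedure itself).\<close>
definition RandMatrix :: "nat \<Rightarrow> nat \<Rightarrow> nat \<Rightarrow> nat \<Rightarrow> nat \<Rightarrow> (nat \<Rightarrow> nat \<Rightarrow> bool) pmf" where
  "RandMatrix t n d k \<alpha> =
     map_pmf (\<lambda>f i j. i \<in> f j) (Pi_pmf {1..n} {} (\<lambda>_. rand_column t d \<alpha>))"

end

theory Submission
  imports Defs
begin


lemma fact_lower: "real k ^ k \<le> 3 ^ k * fact k"
proof -
  have s: "(\<lambda>i. real k ^ i /\<^sub>R fact i) sums exp (real k)" by (rule exp_converges)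
  have "real k ^ k /\<^sub>R fact k = (\<Sum>i\<in>{k}. real k ^ i /\<^sub>R fact i)" by simp
  also have "\<dots> \<le> (\<Sum>i. real k ^ i /\<^sub>R fact i)"
    by (rule sum_le_suminf) (use s in \<open>auto simp: sums_iff\<close>)
  also have "\<dots> = exp (real k)" using s by (simp add: sums_iff)
  also have "\<dots> = exp 1 ^ k" using exp_of_nat_mult[of k 1] by simp
  also have "\<dots> \<le> 3 ^ k" by (intro power_mono exp_le) auto
  finally have "real k ^ k / fact k \<le> 3 ^ k" by (simp add: divide_inverse mult.commute)
  thus ?thesis by (simp add: field_simps)
qed

lemma choose_bound:
  assumes "1 \<le> k" "k \<le> n"
  shows "real (n choose k) \<le> (3 * (real n / real k)) ^ k"
proof -
  have "real (n choose k) * fact k \<le> real n ^ k"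
    using binomial_fact_pow[of n k] by (metis of_nat_fact of_nat_le_iff of_nat_mult of_nat_power)
  moreover have "real k ^ k \<le> 3 ^ k * fact k" by (rule fact_lower)
  ultimately have "real (n choose k) * real k ^ k \<le> 3 ^ k * real n ^ k"
  proof -
    assume a: "real (n choose k) * fact k \<le> real n ^ k" "real k ^ k \<le> 3 ^ k * fact k"
    have "real (n choose k) * real k ^ k \<le> real (n choose k) * (3 ^ k * fact k)"
      by (intro mult_left_mono a(2)) auto
    also have "\<dots> = 3 ^ k * (real (n choose k) * fact k)" by simp
    also have "\<dots> \<le> 3 ^ k * real n ^ k" by (intro mult_left_mono a(1)) auto
    finally show ?thesis by simp
  qed
  moreover have "real k ^ k > 0" using assms by simp
  ultimately show ?thesis by (simp add: power_divide power_mult_distrib field_simps)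
qed

lemma final_arith:
  fixes n k d t :: nat
  assumes n2: "n \<ge> 2" and k1: "1 \<le> k" and kn: "2*k \<le> n"
    and tb: "16384 * (real d * real k + real k ^ 2) * log 2 (real n / real k) \<le> real t"
    and al: "\<alpha> = nat \<lceil>real k * log 2 (real n / real k)\<rceil>"
  shows "(2*d+1)*\<alpha> < t \<and>
    real n * real ((n-1) choose k) * (real (k*\<alpha>) / (real t - real ((2*d+1)*\<alpha>))) ^ \<alpha> \<le> 1 / real n"
proof -
  define x where "x = real n / real k"
  define L where "L = log 2 x"
  have kpos: "real k > 0" using k1 by simp
  have x2: "x \<ge> 2" using kn k1 by (simp add: x_def field_simps)
  have nx: "real n = real k * x" using kpos by (simp add: x_def)
  have L1: "L \<ge> 1" unfolding L_def using x2 by simp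
  have kL: "real k * L \<ge> 1" using mult_mono[of 1 "real k" 1 L] k1 L1 by simp
  have aeq: "real \<alpha> = of_int \<lceil>real k * L\<rceil>" using al kL by (simp add: L_def x_def)
  have a1: "real \<alpha> \<ge> real k * L" using aeq by simp
  have a2: "real \<alpha> \<le> real k * L + 1" using aeq ceiling_correct[of "real k * L"] by linarith
  have a3: "real \<alpha> \<le> 2 * (real k * L)" using a2 kL by linarith
  define D where "D = (real d * real k + real k ^ 2) * L"
  have tD: "16384 * D \<le> real t" using tb unfolding D_def L_def x_def by (metis mult.assoc)
  have kk: "real k \<le> real k ^ 2" using k1 by (simp add: power2_eq_square)
  have kLD: "real k * L \<le> real k ^ 2 * L" using kk L1 by (intro mult_right_mono) auto
  have dkL: "0 \<le> real d * real k * L" using L1 by simp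
  have D_eq: "D = real d * real k * L + real k ^ 2 * L" by (simp add: D_def algebra_simps)
  have Dpos: "D \<ge> 1" using D_eq dkL kLD kL by linarith
  have h1: "real ((2*d+1)*\<alpha>) \<le> 4 * D"
  proof -
    have "real ((2*d+1)*\<alpha>) = (2 * real d + 1) * real \<alpha>" by (simp add: algebra_simps)
    also have "\<dots> \<le> (2 * real d + 1) * (2 * (real k * L))" by (intro mult_left_mono a3) auto
    also have "\<dots> = 4 * (real d * real k * L) + 2 * (real k * L)" by (simp add: algebra_simps)
    also have "\<dots> \<le> 4 * D" using D_eq dkL kLD kL by linarith
    finally show ?thesis .
  qed
  have ta: "real ((2*d+1)*\<alpha>) < real t" using h1 tD Dpos by linarith
  hence ta': "(2*d+1)*\<alpha> < t" by (simp only: of_nat_less_iff)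
  define l where "l = real t - real ((2*d+1)*\<alpha>)"
  have lt: "l \<ge> real t / 2" using h1 tD Dpos unfolding l_def by linarith
  have tpos: "real t > 0" using tD Dpos by linarith
  have h2: "real (k*\<alpha>) \<le> 2 * D"
  proof -
    have "real (k*\<alpha>) = real k * real \<alpha>" by simp
    also have "\<dots> \<le> real k * (2 * (real k * L))" by (intro mult_left_mono a3) auto
    also have "\<dots> = 2 * (real k ^ 2 * L)" by (simp add: power2_eq_square algebra_simps)
    also have "\<dots> \<le> 2 * D" using D_eq dkL by linarith
    finally show ?thesis .
  qed
  define r where "r = real (k*\<alpha>) / l"
  have lpos: "l > 0" using lt tpos by linarith
  have r0: "r \<ge> 0" using lpos by (simp add: r_def)
  have r1: "r \<le> 1 / 4096"
  proof -
    have "r \<le> (2 * D) / (real t / 2)" unfolding r_def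
      by (intro frac_le h2 lt) (use tpos Dpos in auto)
    also have "\<dots> = 4 * D / real t" by simp
    also have "\<dots> \<le> 1 / 4096" using tD tpos by (simp add: field_simps)
    finally show ?thesis .
  qed
  define y where "y = x ^ k"
  have xpos: "x > 0" using x2 by simp
  have q1: "r ^ \<alpha> \<le> 1 / y ^ 12"
  proof -
    have "r ^ \<alpha> \<le> (1/4096) ^ \<alpha>" by (intro power_mono r1 r0)
    also have "\<dots> = (1/4096) powr real \<alpha>" by (simp add: powr_realpow)
    also have "\<dots> \<le> (1/4096) powr (real k * L)" by (intro powr_mono' a1) auto
    also have "(1/4096::real) powr (real k * L) = 1 / (4096 powr (real k * L))"
      by (simp add: powr_divide)
    also have "(4096::real) powr (real k * L) = (2 powr L) powr (real (12 * k))"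
    proof -
      have e: "(2::real) powr (12::real) = 4096" by simp
      have "(2 powr L) powr (real (12*k)) = ((2::real) powr (12::real)) powr (real k * L)"
        by (simp only: powr_powr, rule arg_cong[where f="\<lambda>z. 2 powr z"], simp add: algebra_simps)
      thus ?thesis using e by simp
    qed
    also have "(2 powr L) = x" unfolding L_def using xpos by simp
    also have "x powr (real (12 * k)) = y ^ 12" unfolding y_def power_mult[symmetric] using powr_realpow[OF xpos, of "12*k"] by (simp add: mult.commute)
    finally show ?thesis .
  qed
  have x1: "x \<ge> 1" using x2 by simp
  have ky: "real k \<le> y"
  proof -
    have "real k \<le> 2 ^ k" using less_exp[of k] by (metis less_imp_le of_nat_le_iff of_nat_numeral of_nat_power)
    also have "(2::real) ^ k \<le> x ^ k" by (intro power_mono x2) auto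
    finally show ?thesis by (simp add: y_def)
  qed
  have xy: "x \<le> y" unfolding y_def using power_increasing[of 1 k x] k1 x1 by simp
  have y3: "3 ^ k \<le> y ^ 2"
  proof -
    have "(3::real) ^ k \<le> 4 ^ k" by (intro power_mono) auto
    also have "(4::real) ^ k = (2 ^ k) ^ 2" by (simp add: power2_eq_square power_mult_distrib[symmetric])
    also have "\<dots> \<le> (x ^ k) ^ 2" by (intro power_mono x2) auto
    finally show ?thesis by (simp add: y_def)
  qed
  have y1: "y \<ge> 1" using xy x1 by linarith
  have ypos: "y > 0" using y1 by linarith
  have big: "real n ^ 2 * 3 ^ k \<le> y ^ 11"
  proof -
    have "real n ^ 2 * 3 ^ k = real k ^ 2 * x ^ 2 * 3 ^ k" by (simp add: nx power_mult_distrib)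
    also have "\<dots> \<le> y ^ 2 * y ^ 2 * y ^ 2"
      by (intro mult_mono power_mono ky xy y3) (use xpos in auto)
    also have "\<dots> = y ^ 6" by (simp add: power_add[symmetric])
    also have "\<dots> \<le> y ^ 11" by (intro power_increasing y1) auto
    finally show ?thesis .
  qed
  have cb: "real ((n-1) choose k) \<le> 3 ^ k * y"
  proof -
    have "(n-1) choose k \<le> n choose k" using choose_reduce_nat[of n k] n2 k1 by simp
    hence "real ((n-1) choose k) \<le> real (n choose k)" by (simp only: of_nat_le_iff)
    also have "\<dots> \<le> (3 * x) ^ k" unfolding x_def by (rule choose_bound) (use k1 kn in auto)
    also have "\<dots> = 3 ^ k * y" by (simp add: y_def power_mult_distrib)
    finally show ?thesis .
  qed
  have npos: "real n > 0" using n2 by simp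
  have "real n * real ((n-1) choose k) * r ^ \<alpha> \<le> real n * (3 ^ k * y) * (1 / y ^ 12)"
    by (intro mult_mono cb q1 mult_left_mono) (use npos r0 ypos in auto)
  also have "\<dots> = (real n ^ 2 * 3 ^ k) / (real n * y ^ 11)"
    using ypos npos by (simp add: field_simps power2_eq_square eval_nat_numeral)
  also have "\<dots> \<le> y ^ 11 / (real n * y ^ 11)"
    by (intro divide_right_mono big) (use npos ypos in auto)
  also have "\<dots> = 1 / real n" using ypos by simp
  finally show ?thesis using ta' by (simp add: r_def l_def)
qed



definition rem :: "nat \<Rightarrow> nat \<Rightarrow> nat \<Rightarrow> nat \<Rightarrow> bool" where
  "rem d p L q \<longleftrightarrow> (\<exists>m\<le>2*d. q = (p + L * (d + 1) - d + m) mod L)"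

lemma rw_alt: "remove_window d p xs = map (\<lambda>q. xs ! q) (filter (\<lambda>q. \<not> rem d p (length xs) q) [0..<length xs])"
  by (simp add: remove_window_def rem_def Let_def)

lemma rw_length: "length xs \<le> length (remove_window d p xs) + (2*d+1)"
proof -
  let ?L = "length xs"
  have e1: "length (remove_window d p xs) = card {q. q < ?L \<and> \<not> rem d p ?L q}"
    unfolding rw_alt length_map length_filter_conv_card by (rule arg_cong[where f=card]) auto
  have s1: "{q. q < ?L \<and> rem d p ?L q} \<subseteq> (\<lambda>m. (p + ?L * (d + 1) - d + m) mod ?L) ` {0..2*d}"
    by (auto simp: rem_def)
  have c1: "card {q. q < ?L \<and> rem d p ?L q} \<le> card ((\<lambda>m. (p + ?L * (d + 1) - d + m) mod ?L) ` {0..2*d})"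
    using s1 by (intro card_mono) auto
  have c2: "card ((\<lambda>m. (p + ?L * (d + 1) - d + m) mod ?L) ` {0..2*d}) \<le> card {0..2*d}"
    by (rule card_image_le) simp
  have c3: "card {0..2*d} = 2*d+1" by simp
  have u: "{q. q < ?L} = {q. q < ?L \<and> \<not> rem d p ?L q} \<union> {q. q < ?L \<and> rem d p ?L q}" by auto
  have c4: "?L \<le> card {q. q < ?L \<and> \<not> rem d p ?L q} + card {q. q < ?L \<and> rem d p ?L q}"
  proof -
    have "card {q. q < ?L} = ?L" by (simp add: lessThan_def[symmetric])
    moreover have "card {q. q < ?L} \<le> card {q. q < ?L \<and> \<not> rem d p ?L q} + card {q. q < ?L \<and> rem d p ?L q}"
      unfolding u by (rule card_Un_le)
    ultimately show ?thesis by simp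
  qed
  show ?thesis using e1 c1 c2 c3 c4 by linarith
qed

lemma rw_set: "y \<in> set (remove_window d p xs) \<Longrightarrow> \<exists>q<length xs. \<not> rem d p (length xs) q \<and> y = xs ! q"
  by (auto simp: rw_alt)

lemma rw_sorted: "sorted_wrt (<) xs \<Longrightarrow> sorted_wrt (<) (remove_window d p (xs::nat list))"
  unfolding rw_alt sorted_wrt_map
  by (rule sorted_wrt_filter, rule sorted_wrt_mono_rel[OF _ sorted_wrt_upt])
     (auto simp: sorted_wrt_nth_less)

lemma sorted_gap: "sorted_wrt (<) (xs::nat list) \<Longrightarrow> p \<le> q \<Longrightarrow> q < length xs \<Longrightarrow> xs ! p + (q - p) \<le> xs ! q"
proof (induction q)
  case 0 then show ?case by simp
next
  case (Suc q)
  show ?case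
  proof (cases "p = Suc q")
    case True then show ?thesis by simp
  next
    case False
    with Suc have "xs ! p + (q - p) \<le> xs ! q" by simp
    moreover have "xs ! q < xs ! Suc q" using Suc.prems by (simp add: sorted_wrt_nth_less)
    ultimately show ?thesis using False Suc.prems by linarith
  qed
qed

lemma rem_self: "p < L \<Longrightarrow> rem d p L p"
proof -
  assume "p < L"
  have h: "d \<le> L * (d+1)" using \<open>p < L\<close> by (simp add: trans_le_add2)
  have "p + L * (d + 1) - d + d = p + L * (d+1)" using h by linarith
  moreover have "(p + L * (d + 1)) mod L = p" using \<open>p < L\<close> by (subst mod_mult_self2) simp
  ultimately have "(p + L * (d + 1) - d + d) mod L = p" by simp
  thus ?thesis unfolding rem_def by (metis le_add2 mult_2)
qed

lemma rem_after: "p < q \<Longrightarrow> q < L \<Longrightarrow> q - p \<le> d \<Longrightarrow> rem d p L q"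
proof -
  assume a: "p < q" "q < L" "q - p \<le> d"
  have h: "d \<le> L * (d+1)" using a by (simp add: trans_le_add2)
  have "p + L * (d + 1) - d + (d + (q - p)) = q + L * (d+1)" using a h by linarith
  hence "(p + L * (d + 1) - d + (d + (q-p))) mod L = q" using a by simp
  moreover have "d + (q - p) \<le> 2*d" using a by simp
  ultimately show ?thesis unfolding rem_def by metis
qed

lemma rem_before: "q < p \<Longrightarrow> p < L \<Longrightarrow> p - q \<le> d \<Longrightarrow> rem d p L q"
proof -
  assume a: "q < p" "p < L" "p - q \<le> d"
  have "L * (d+1) \<ge> d" using a by (simp add: trans_le_add2)
  hence "p + L * (d + 1) - d + (d - (p - q)) = q + L * (d+1)" using a by linarith
  hence "(p + L * (d + 1) - d + (d - (p-q))) mod L = q" using a by simp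
  moreover have "d - (p - q) \<le> 2*d" by simp
  ultimately show ?thesis unfolding rem_def by metis
qed

lemma rw_far:
  assumes "sorted_wrt (<) (xs::nat list)" "p < length xs" "y \<in> set (remove_window d p xs)"
  shows "xs ! p + d < y \<or> y + d < xs ! p"
proof -
  obtain q where q: "q < length xs" "\<not> rem d p (length xs) q" "y = xs ! q"
    using rw_set[OF assms(3)] by blast
  consider "p < q" | "q < p" | "p = q" by linarith
  then show ?thesis
  proof cases
    case 1
    then have "d < q - p" using rem_after[of p q "length xs" d] q by linarith
    moreover have "xs ! p + (q - p) \<le> xs ! q" using sorted_gap[OF assms(1), of p q] 1 q by simp
    ultimately show ?thesis using q by arith
  next
    case 2
    then have "d < p - q" using rem_before[of q p "length xs" d] q assms by linarith
    moreover have "xs ! q + (p - q) \<le> xs ! p" using sorted_gap[OF assms(1), of q p] 2 assms by simp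
    ultimately show ?thesis using q by arith
  next
    case 3 then show ?thesis using rem_self[OF assms(2)] q by simp
  qed
qed



definition Inv :: "nat \<Rightarrow> nat \<Rightarrow> nat \<Rightarrow> nat list \<times> nat set \<Rightarrow> bool" where
  "Inv t d m s \<longleftrightarrow> (case s of (I, S) \<Rightarrow>
     sorted_wrt (<) I \<and> set I \<subseteq> {1..t} \<and> S \<subseteq> {1..t} \<and> finite S \<and> card S \<le> m \<and>
     t \<le> length I + (2*d+1)*m \<and>
     (\<forall>x\<in>S. \<forall>y\<in>set I. x+d<y \<or> y+d<x) \<and> (\<forall>x\<in>S. \<forall>y\<in>S. x<y \<longrightarrow> x+d<y))"

lemma Inv_init: "Inv t d 0 ([1..<Suc t], {})"
  by (simp add: Inv_def sorted_wrt_upt atLeastLessThanSuc_atLeastAtMost del: upt_Suc)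

lemma Inv_step:
  assumes "Inv t d m s" "s' \<in> set_pmf (rm_step d s)"
  shows "Inv t d (Suc m) s'"
proof -
  obtain I S where s: "s = (I, S)" by (cases s)
  show ?thesis
  proof (cases "I = []")
    case True
    then show ?thesis using assms s by (auto simp: rm_step_def Inv_def)
  next
    case False
    then obtain p where p: "p < length I" "s' = (remove_window d p I, insert (I ! p) S)"
      using assms(2) s by (auto simp: rm_step_def)
    have inv: "sorted_wrt (<) I" "set I \<subseteq> {1..t}" "S \<subseteq> {1..t}" "finite S" "card S \<le> m"
      "t \<le> length I + (2*d+1)*m" "\<forall>x\<in>S. \<forall>y\<in>set I. x+d<y \<or> y+d<x" "\<forall>x\<in>S. \<forall>y\<in>S. x<y \<longrightarrow> x+d<y"
      using assms(1) s by (auto simp: Inv_def)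
    let ?I' = "remove_window d p I" and ?z = "I ! p"
    have zI: "?z \<in> set I" using p by simp
    have sub: "set ?I' \<subseteq> set I" by (auto simp: rw_alt)
    have "sorted_wrt (<) ?I'" using rw_sorted[OF inv(1)] .
    moreover have "set ?I' \<subseteq> {1..t}" using sub inv(2) by blast
    moreover have "insert ?z S \<subseteq> {1..t}" using zI inv by blast
    moreover have "finite (insert ?z S)" using inv by simp
    moreover have "card (insert ?z S) \<le> Suc m" using inv card_insert_le[of S ?z] by (simp add: card_insert_if)
    moreover have "t \<le> length ?I' + (2*d+1)*Suc m" using inv(6) rw_length[of I d p] by simp
    moreover have "\<forall>x\<in>insert ?z S. \<forall>y\<in>set ?I'. x+d<y \<or> y+d<x"
      using inv(7) sub rw_far[OF inv(1) p(1)] by blast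
    moreover have "\<forall>x\<in>insert ?z S. \<forall>y\<in>insert ?z S. x<y \<longrightarrow> x+d<y"
      using inv(7,8) zI by fastforce
    ultimately show ?thesis using p by (simp add: Inv_def)
  qed
qed

lemma Inv_iter: "s \<in> set_pmf (rm_iter d m ([1..<Suc t], {})) \<Longrightarrow> Inv t d m s"
proof (induction m arbitrary: s)
  case 0 then show ?case using Inv_init by simp
next
  case (Suc m)
  then obtain s0 where "s0 \<in> set_pmf (rm_iter d m ([1..<Suc t], {}))" "s \<in> set_pmf (rm_step d s0)"
    by auto
  then show ?case using Suc.IH Inv_step by blast
qed

lemma col_props:
  assumes "S \<in> set_pmf (rand_column t d \<alpha>)"
  shows "S \<subseteq> {1..t}" "finite S" "card S \<le> \<alpha>" "\<forall>x\<in>S. \<forall>y\<in>S. x<y \<longrightarrow> x+d<y"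
proof -
  obtain I where "(I, S) \<in> set_pmf (rm_iter d \<alpha> ([1..<Suc t], {}))"
    using assms unfolding rand_column_def by auto
  hence "Inv t d \<alpha> (I, S)" by (rule Inv_iter)
  thus "S \<subseteq> {1..t}" "finite S" "card S \<le> \<alpha>" "\<forall>x\<in>S. \<forall>y\<in>S. x<y \<longrightarrow> x+d<y"
    by (simp_all add: Inv_def)
qed



lemma prob_bind_pmf:
  "measure_pmf.prob (bind_pmf M N) X = (\<integral>x. measure_pmf.prob (N x) X \<partial>M)"
proof -
  have "ennreal (measure_pmf.prob (bind_pmf M N) X) = emeasure (bind_pmf M N) X"
    by (simp add: measure_pmf.emeasure_eq_measure)
  also have "\<dots> = (\<integral>\<^sup>+x. emeasure (N x) X \<partial>M)" by simp
  also have "\<dots> = (\<integral>\<^sup>+x. ennreal (measure_pmf.prob (N x) X) \<partial>M)"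
    by (simp add: measure_pmf.emeasure_eq_measure)
  also have "\<dots> = ennreal (\<integral>x. measure_pmf.prob (N x) X \<partial>M)"
    by (intro nn_integral_eq_integral measure_pmf.integrable_const_bound[where B=1]) auto
  finally show ?thesis by (simp add: integral_nonneg_AE)
qed

lemma prob_bind_le:
  assumes "\<And>x. x \<in> set_pmf M \<Longrightarrow> measure_pmf.prob (N x) X \<le> c * indicator A x" "c \<ge> 0"
  shows "measure_pmf.prob (bind_pmf M N) X \<le> c * measure_pmf.prob M A"
proof -
  have "measure_pmf.prob (bind_pmf M N) X = (\<integral>x. measure_pmf.prob (N x) X \<partial>M)"
    by (rule prob_bind_pmf)
  also have "\<dots> \<le> (\<integral>x. c * indicator A x \<partial>M)"
  proof (intro integral_mono_AE AE_pmfI assms)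
    show "integrable (measure_pmf M) (\<lambda>x. measure_pmf.prob (N x) X)"
      by (intro measure_pmf.integrable_const_bound[where B=1]) auto
    show "integrable (measure_pmf M) (\<lambda>x. c * indicator A x)"
      by (intro measure_pmf.integrable_const_bound[where B=c]) (auto simp: indicator_def assms)
  qed
  also have "\<dots> = c * measure_pmf.prob M A" by simp
  finally show ?thesis .
qed

lemma step_prob:
  assumes "I \<noteq> []" "sorted_wrt (<) (I::nat list)" "finite U"
  shows "measure_pmf.prob (rm_step d (I, S)) {s. snd s \<subseteq> U}
           \<le> (card U / length I) * indicator {s. snd s \<subseteq> U} (I, S)"
proof -
  let ?L = "length I"
  have eq: "rm_step d (I, S) = map_pmf (\<lambda>p. (remove_window d p I, insert (I ! p) S)) (pmf_of_set {0..<?L})"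
    using assms(1) by (simp add: rm_step_def map_pmf_def)
  have ne: "{0..<?L} \<noteq> {}" using assms(1) by simp
  have pr: "measure_pmf.prob (rm_step d (I, S)) {s. snd s \<subseteq> U}
      = card ({0..<?L} \<inter> {p. insert (I ! p) S \<subseteq> U}) / ?L"
    unfolding eq measure_map_pmf measure_pmf_of_set[OF ne finite_atLeastLessThan] by (simp add: vimage_def)
  show ?thesis
  proof (cases "S \<subseteq> U")
    case False
    then have "{0..<?L} \<inter> {p. insert (I ! p) S \<subseteq> U} = {}" by auto
    then show ?thesis using pr False by (simp add: indicator_def)
  next
    case True
    have dist: "distinct I" using assms(2) by (simp add: strict_sorted_iff)
    have "card ({0..<?L} \<inter> {p. insert (I ! p) S \<subseteq> U}) \<le> card U"
    proof (rule card_inj_on_le[where f="\<lambda>p. I ! p"])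
      show "inj_on ((!) I) ({0..<length I} \<inter> {p. insert (I ! p) S \<subseteq> U})"
        using dist by (auto simp: inj_on_def nth_eq_iff_index_eq)
    qed (use assms(3) in auto)
    then show ?thesis using pr True by (simp add: indicator_def divide_right_mono)
  qed
qed

lemma iter_prob:
  assumes "finite U" "(2*d+1)*m < t"
  shows "measure_pmf.prob (rm_iter d m ([1..<Suc t], {})) {s. snd s \<subseteq> U}
           \<le> (card U / (real t - real ((2*d+1)*m))) ^ m"
  using assms(2)
proof (induction m)
  case 0 then show ?case by simp
next
  case (Suc m)
  let ?l = "real t - real ((2*d+1)*Suc m)"
  let ?lz = "real t - real ((2*d+1)*m)"
  have "real ((2*d+1)*Suc m) < real t" using Suc.prems by (simp only: of_nat_less_iff)
  hence lpos: "real t - real ((2*d+1)*Suc m) > 0" by linarith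
  have ll0: "?l \<le> ?lz" by simp
  have l0pos: "?lz > 0" using lpos ll0 by linarith
  have IH: "measure_pmf.prob (rm_iter d m ([1..<Suc t], {})) {s. snd s \<subseteq> U} \<le> (card U / ?lz) ^ m"
    using Suc.IH Suc.prems by (simp add: mult_Suc_right)
  have "measure_pmf.prob (rm_iter d (Suc m) ([1..<Suc t], {})) {s. snd s \<subseteq> U}
      \<le> (card U / ?l) * measure_pmf.prob (rm_iter d m ([1..<Suc t], {})) {s. snd s \<subseteq> U}"
    unfolding rm_iter.simps
  proof (rule prob_bind_le)
    fix s assume s: "s \<in> set_pmf (rm_iter d m ([1..<Suc t], {}))"
    obtain I S where sIS: "s = (I, S)" by (cases s)
    have inv: "Inv t d m (I, S)" using Inv_iter s sIS by blast
    hence len: "t \<le> length I + (2*d+1)*m" and sorted: "sorted_wrt (<) I" by (auto simp: Inv_def)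
    have "real t \<le> real (length I) + real ((2*d+1)*m)" using len by (simp only: of_nat_add[symmetric] of_nat_le_iff)
    hence "real (length I) \<ge> ?lz" by linarith
    hence lI: "real (length I) \<ge> ?l" using ll0 by linarith
    hence "I \<noteq> []" using lpos by auto
    have pp: "0 < real (length I) * ?l" using lI lpos by (intro mult_pos_pos) auto
    have "measure_pmf.prob (rm_step d (I, S)) {s. snd s \<subseteq> U}
           \<le> (card U / length I) * indicator {s. snd s \<subseteq> U} (I, S)"
      by (rule step_prob[OF \<open>I \<noteq> []\<close> sorted assms(1)])
    also have "\<dots> \<le> (card U / ?l) * indicator {s. snd s \<subseteq> U} (I, S)"
      by (intro mult_right_mono divide_left_mono lI) (use lpos pp in auto)
    finally show "measure_pmf.prob (rm_step d s) {s. snd s \<subseteq> U} \<le> (card U / ?l) * indicator {s. snd s \<subseteq> U} s"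
      using sIS by simp
  qed (use lpos in simp)
  also have "\<dots> \<le> (card U / ?l) * (card U / ?lz) ^ m"
    by (intro mult_left_mono IH) (use lpos in simp)
  also have "\<dots> \<le> (card U / ?l) * (card U / ?l) ^ m"
    by (intro mult_left_mono power_mono divide_left_mono ll0) (use lpos l0pos in auto)
  finally show ?case by simp
qed

lemma col_prob:
  assumes "finite U" "(2*d+1)*\<alpha> < t"
  shows "measure_pmf.prob (rand_column t d \<alpha>) {S. S \<subseteq> U}
           \<le> (card U / (real t - real ((2*d+1)*\<alpha>))) ^ \<alpha>"
  using iter_prob[OF assms] unfolding rand_column_def measure_map_pmf by (simp add: vimage_def)



lemma RM_set:
  assumes "M \<in> set_pmf (RandMatrix t n d k \<alpha>)"
  obtains f where "\<And>j. j \<in> {1..n} \<Longrightarrow> f j \<in> set_pmf (rand_column t d \<alpha>)" "M = (\<lambda>i j. i \<in> f j)"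
  using assms unfolding RandMatrix_def by (auto simp: set_Pi_pmf PiE_dflt_def)

lemma RM_runlength:
  assumes "M \<in> set_pmf (RandMatrix t n d k \<alpha>)"
  shows "runlength_constrained t n d M"
proof -
  obtain f where f: "\<And>j. j \<in> {1..n} \<Longrightarrow> f j \<in> set_pmf (rand_column t d \<alpha>)" "M = (\<lambda>i j. i \<in> f j)"
    using RM_set[OF assms] by blast
  show ?thesis unfolding runlength_constrained_def
  proof (intro ballI impI)
    fix j i i' assume j: "j \<in> {1..n}" and h: "M i j \<and> M i' j \<and> i < i'"
    have "\<forall>x\<in>f j. \<forall>y\<in>f j. x<y \<longrightarrow> x+d<y" using col_props(4)[OF f(1)[OF j]] .
    moreover have "i \<in> f j" "i' \<in> f j" using h f(2) by auto
    ultimately have "i + d < i'" using h by blast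
    then show "d + 1 \<le> i' - i" by linarith
  qed
qed

lemma event_prob:
  assumes j: "j \<in> {1..n}" and S: "S \<subseteq> {1..n}" "j \<notin> S" "card S \<le> k" and ta: "(2*d+1)*\<alpha> < t"
  shows "measure_pmf.prob (RandMatrix t n d k \<alpha>) {M. col_supp t M j \<subseteq> (\<Union>j'\<in>S. col_supp t M j')}
     \<le> (real (k*\<alpha>) / (real t - real ((2*d+1)*\<alpha>))) ^ \<alpha>"
proof -
  define c where "c = rand_column t d \<alpha>"
  define A where "A = {1..n} - {j}"
  define P where "P = Pi_pmf A {} (\<lambda>_. c)"
  define g where "g = (\<lambda>(f::nat \<Rightarrow> nat set) i j. i \<in> f j)"
  define X where "X = {M. col_supp t M j \<subseteq> (\<Union>j'\<in>S. col_supp t M j')}"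
  define q where "q = (real (k*\<alpha>) / (real t - real ((2*d+1)*\<alpha>))) ^ \<alpha>"
  have "real ((2*d+1)*\<alpha>) < real t" using ta by (simp only: of_nat_less_iff)
  hence lpos: "real t - real ((2*d+1)*\<alpha>) > 0" by linarith
  have fA: "finite A" and jA: "j \<notin> A" and ins: "insert j A = {1..n}" using j by (auto simp: A_def)
  have "Pi_pmf {1..n} {} (\<lambda>_. c) = bind_pmf c (\<lambda>y. bind_pmf P (\<lambda>f. return_pmf (f(j := y))))"
    unfolding P_def ins[symmetric] by (rule Pi_pmf_insert'[OF fA jA])
  also have "\<dots> = bind_pmf P (\<lambda>f. bind_pmf c (\<lambda>y. return_pmf (f(j := y))))"
    by (rule bind_commute_pmf)
  finally have eq: "RandMatrix t n d k \<alpha> = map_pmf g (bind_pmf P (\<lambda>f. bind_pmf c (\<lambda>y. return_pmf (f(j := y)))))"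
    unfolding RandMatrix_def c_def g_def by simp
  have "measure_pmf.prob (RandMatrix t n d k \<alpha>) X
      = measure_pmf.prob (bind_pmf P (\<lambda>f. bind_pmf c (\<lambda>y. return_pmf (f(j := y))))) (g -` X)"
    unfolding eq measure_map_pmf ..
  also have "\<dots> \<le> q * measure_pmf.prob P UNIV"
  proof (rule prob_bind_le)
    fix f assume f: "f \<in> set_pmf P"
    have fc: "\<And>j'. j' \<in> A \<Longrightarrow> f j' \<in> set_pmf c"
      using f fA unfolding P_def by (auto simp: set_Pi_pmf PiE_dflt_def)
    define U where "U = (\<Union>j'\<in>S. f j')"
    have SA: "S \<subseteq> A" using S by (auto simp: A_def)
    have fS: "finite S" using S(1) finite_subset by blast
    have finU: "finite U" unfolding U_def using fS SA fc col_props(2) c_def by blast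
    have "card U \<le> (\<Sum>j'\<in>S. card (f j'))" unfolding U_def by (rule card_UN_le[OF fS])
    also have "\<dots> \<le> (\<Sum>j'\<in>S. \<alpha>)" using SA fc col_props(3) c_def by (intro sum_mono) blast
    also have "\<dots> \<le> k * \<alpha>" using S(3) by simp
    finally have cU0: "card U \<le> k * \<alpha>" .
    hence cU: "real (card U) \<le> real (k * \<alpha>)" by (simp only: of_nat_le_iff)
    have "measure_pmf.prob (bind_pmf c (\<lambda>y. return_pmf (f(j := y)))) (g -` X)
        = measure_pmf.prob c ((\<lambda>y. f(j := y)) -` (g -` X))"
      by (simp add: map_pmf_def[symmetric])
    also have "\<dots> = measure_pmf.prob c (((\<lambda>y. f(j := y)) -` (g -` X)) \<inter> set_pmf c)"
      by (rule measure_Int_set_pmf[symmetric])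
    also have "\<dots> \<le> measure_pmf.prob c {y. y \<subseteq> U}"
    proof (rule measure_pmf.finite_measure_mono)
      show "(\<lambda>y. f(j := y)) -` g -` X \<inter> set_pmf c \<subseteq> {y. y \<subseteq> U}"
      proof
        fix y assume y: "y \<in> (\<lambda>y. f(j := y)) -` g -` X \<inter> set_pmf c"
        have yt: "y \<subseteq> {1..t}" using y col_props(1) c_def by blast
        have e1: "\<And>j'. j' \<in> S \<Longrightarrow> col_supp t (g (f(j:=y))) j' = {i\<in>{1..t}. i\<in>f j'}"
          using S(2) by (auto simp: g_def col_supp_def)
        have e2: "(\<Union>j'\<in>S. col_supp t (g (f(j:=y))) j') = (\<Union>j'\<in>S. {i\<in>{1..t}. i\<in>f j'})"
          by (rule SUP_cong[OF refl e1])
        have e3: "col_supp t (g (f(j:=y))) j = {i\<in>{1..t}. i\<in>y}" by (simp add: g_def col_supp_def)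
        have "col_supp t (g (f(j:=y))) j \<subseteq> (\<Union>j'\<in>S. col_supp t (g (f(j:=y))) j')"
          using y by (simp add: X_def)
        hence "{i \<in> {1..t}. i \<in> y} \<subseteq> (\<Union>j'\<in>S. {i \<in> {1..t}. i \<in> f j'})"
          unfolding e2 e3 .
        then show "y \<in> {y. y \<subseteq> U}" using yt unfolding U_def by blast
      qed
    qed auto
    also have "\<dots> \<le> (card U / (real t - real ((2*d+1)*\<alpha>))) ^ \<alpha>"
      unfolding c_def by (rule col_prob[OF finU ta])
    also have "\<dots> \<le> q" unfolding q_def
      by (intro power_mono divide_right_mono) (use cU lpos in simp_all)
    finally show "measure_pmf.prob (bind_pmf c (\<lambda>y. return_pmf (f(j := y)))) (g -` X) \<le> q * indicator UNIV f"
      by simp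
  qed (use lpos in \<open>simp add: q_def\<close>)
  also have "\<dots> = q" by simp
  finally show ?thesis unfolding X_def q_def .
qed



lemma fail_prob:
  assumes kn: "k + 1 \<le> n" and ta: "(2*d+1)*\<alpha> < t"
  shows "measure_pmf.prob (RandMatrix t n d k \<alpha>) {M. \<not> disjunct t n k M}
     \<le> real n * real ((n-1) choose k) * (real (k*\<alpha>) / (real t - real ((2*d+1)*\<alpha>))) ^ \<alpha>"
proof -
  define q where "q = (real (k*\<alpha>) / (real t - real ((2*d+1)*\<alpha>))) ^ \<alpha>"
  define Sub where "Sub = (\<lambda>j. {S. S \<subseteq> {1..n} - {j} \<and> card S = k})"
  define II where "II = Sigma {1..n} Sub"
  define E where "E = (\<lambda>(j, S). {M. col_supp t M j \<subseteq> (\<Union>j'\<in>S. col_supp t M j')})"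
  have cardD: "\<And>j. j \<in> {1..n} \<Longrightarrow> card ({1..n} - {j}) = n - 1" by simp
  have finSub: "\<And>j. finite (Sub j)" unfolding Sub_def by (rule finite_subset[of _ "Pow {1..n}"]) auto
  have finII: "finite II" unfolding II_def using finSub by auto
  have cardSub: "card (Sub j) = (n-1) choose k" if "j \<in> {1..n}" for j
    unfolding Sub_def using n_subsets[of "{1..n} - {j}" k] cardD[OF that] by simp
  have cardII: "card II = n * ((n-1) choose k)"
    unfolding II_def by (simp add: card_SigmaI finSub cardSub)
  have sub: "{M. \<not> disjunct t n k M} \<subseteq> (\<Union>i\<in>II. E i)"
  proof
    fix M assume "M \<in> {M. \<not> disjunct t n k M}"
    then obtain j S where j: "j \<in> {1..n}" and S: "S \<subseteq> {1..n}" "card S \<le> k" "j \<notin> S"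
      and inc: "col_supp t M j \<subseteq> (\<Union>j'\<in>S. col_supp t M j')"
      unfolding disjunct_def by blast
    have "k \<le> card ({1..n} - {j})" using cardD[OF j] kn by simp
    then obtain S' where S': "S \<subseteq> S'" "S' \<subseteq> {1..n} - {j}" "card S' = k"
      using exists_subset_between[of S k "{1..n} - {j}"] S by auto
    have "(j, S') \<in> II" using j S' by (simp add: II_def Sub_def)
    moreover have "M \<in> E (j, S')" using inc S'(1) by (auto simp: E_def)
    ultimately show "M \<in> (\<Union>i\<in>II. E i)" by blast
  qed
  have "measure_pmf.prob (RandMatrix t n d k \<alpha>) {M. \<not> disjunct t n k M}
      \<le> measure_pmf.prob (RandMatrix t n d k \<alpha>) (\<Union>i\<in>II. E i)"
    by (rule measure_pmf.finite_measure_mono[OF sub]) auto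
  also have "\<dots> \<le> (\<Sum>i\<in>II. measure_pmf.prob (RandMatrix t n d k \<alpha>) (E i))"
    by (rule measure_pmf.finite_measure_subadditive_finite[OF finII]) auto
  also have "\<dots> \<le> (\<Sum>i\<in>II. q)"
  proof (rule sum_mono)
    fix i assume i: "i \<in> II"
    then obtain j S where i': "i = (j, S)" "j \<in> {1..n}" "S \<subseteq> {1..n} - {j}" "card S = k"
      by (auto simp: II_def Sub_def)
    show "measure_pmf.prob (RandMatrix t n d k \<alpha>) (E i) \<le> q"
      unfolding i' E_def q_def using event_prob[OF i'(2) _ _ _ ta, of S k] i' by auto
  qed
  also have "\<dots> = real n * real ((n-1) choose k) * q" using cardII by simp
  finally show ?thesis unfolding q_def .
qed

theorem theorem1:
  "\<exists>C C' :: real. C > 0 \<and> C' > 0 \<and>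
     (\<forall>n k d t :: nat. n \<ge> 2 \<longrightarrow> 1 \<le> k \<longrightarrow> 2 * k \<le> n \<longrightarrow>
        real t \<ge> C * (real d * real k + real k ^ 2) * log 2 (real n / real k) \<longrightarrow>
        (let \<alpha> = nat \<lceil>real k * log 2 (real n / real k)\<rceil> in
           (\<forall>M \<in> set_pmf (RandMatrix t n d k \<alpha>). runlength_constrained t n d M) \<and>
           measure_pmf.prob (RandMatrix t n d k \<alpha>) {M. disjunct t n k M} \<ge> 1 - C' / real n))"
proof -
  have main: "let \<alpha> = nat \<lceil>real k * log 2 (real n / real k)\<rceil> in
           (\<forall>M \<in> set_pmf (RandMatrix t n d k \<alpha>). runlength_constrained t n d M) \<and>
           measure_pmf.prob (RandMatrix t n d k \<alpha>) {M. disjunct t n k M} \<ge> 1 - 1 / real n"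
    if n2: "n \<ge> 2" and k1: "1 \<le> k" and kn: "2 * k \<le> n"
    and tb: "16384 * (real d * real k + real k ^ 2) * log 2 (real n / real k) \<le> real t"
    for n k d t :: nat
  proof -
    define \<alpha> where "\<alpha> = nat \<lceil>real k * log 2 (real n / real k)\<rceil>"
    have fa: "(2*d+1)*\<alpha> < t \<and>
      real n * real ((n-1) choose k) * (real (k*\<alpha>) / (real t - real ((2*d+1)*\<alpha>))) ^ \<alpha> \<le> 1 / real n"
      by (rule final_arith[OF n2 k1 kn tb \<alpha>_def])
    have kn1: "k + 1 \<le> n" using kn k1 by linarith
    have fp: "measure_pmf.prob (RandMatrix t n d k \<alpha>) {M. \<not> disjunct t n k M} \<le> 1 / real n"
      using fail_prob[OF kn1, of d \<alpha> t] fa by linarith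
    have "measure_pmf.prob (RandMatrix t n d k \<alpha>) {M. disjunct t n k M}
        = 1 - measure_pmf.prob (RandMatrix t n d k \<alpha>) {M. \<not> disjunct t n k M}"
      using measure_pmf.prob_compl[of "{M. \<not> disjunct t n k M}" "RandMatrix t n d k \<alpha>"]
      by (simp add: Compl_eq_Diff_UNIV[symmetric] Collect_neg_eq[symmetric])
    hence "measure_pmf.prob (RandMatrix t n d k \<alpha>) {M. disjunct t n k M} \<ge> 1 - 1 / real n"
      using fp by linarith
    moreover have "\<forall>M \<in> set_pmf (RandMatrix t n d k \<alpha>). runlength_constrained t n d M"
      using RM_runlength by blast
    ultimately show ?thesis unfolding Let_def \<alpha>_def by blast
  qed
  show ?thesis
    apply (rule exI[of _ "16384::real"], rule exI[of _ "1::real"])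
    apply (intro conjI allI impI)
      apply simp
     apply simp
    apply (rule main)
       apply assumption+
    done
qed

end
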